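(* Let $x_1,x_2,\dots,y_1,y_2,\dots$ be indeterminates and $$F(q)=\sum_{d\ge0}\ \sum_{0=d_0<d_1<\dots<d_r=d}\frac{\prod_{i=1}^r\left(y_{d_i-d_{i-1}}+x_{d_i-d_{i-1}}d_{i-1}\right)}{r!}q^d\in\mathbb Q[x_k,y_k]_{k\ge1}[[q]]$$ (the $d=0$ term being $1$, from $r=0$). Then every coefficient of $q^d$ in $\log F(q)$ is a polynomial of degree at most one in the variables $y_1,y_2,\dots$. *)

theory Defs
  imports "HOL-Library.Poly_Mapping" "HOL-Computational_Algebra.Formal_Power_Series"
begin

datatype var = X nat | Y nat

text \<open>The polynomial ring Q[x_k, y_k]_(k >= 1): finitely supported maps from monomials
  (finitely supported exponent vectors) to rational coefficients.\<close>
type_synonym mpoly = "(var \<Rightarrow>\<^sub>0 nat) \<Rightarrow>\<^sub>0 rat"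

definition pvar :: "var \<Rightarrow> mpoly" where
  "pvar v = Poly_Mapping.single (Poly_Mapping.single v 1) 1"

definition pconst :: "rat \<Rightarrow> mpoly" where
  "pconst c = Poly_Mapping.single 0 c"

text \<open>Chains 0 = d_0 < d_1 < ... < d_r = d, as lists [d_0, ..., d_r].\<close>
definition chains :: "nat \<Rightarrow> nat list set" where
  "chains d = {ds. ds \<noteq> [] \<and> hd ds = 0 \<and> last ds = d \<and> sorted_wrt (<) ds}"

definition chain_term :: "nat list \<Rightarrow> mpoly" where
  "chain_term ds = (let r = length ds - 1 in
     pconst (1 / of_nat (fact r)) *
     (\<Prod>i\<in>{1..r}. pvar (Y (ds!i - ds!(i-1))) + pvar (X (ds!i - ds!(i-1))) * of_nat (ds!(i-1))))"

definition F_series :: "mpoly fps" where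
  "F_series = Abs_fps (\<lambda>d. \<Sum>ds\<in>chains d. chain_term ds)"

text \<open>Logarithm of a power series with constant term 1 over a Q-algebra:
  log F = sum_{n>=1} (-1)^(n+1) (F - 1)^n / n (the coefficient of q^d is a finite sum).\<close>
definition fps_log :: "mpoly fps \<Rightarrow> mpoly fps" where
  "fps_log f = Abs_fps (\<lambda>d. \<Sum>n\<in>{1..d}. pconst ((-1)^(n+1) / of_nat n) * fps_nth ((f - 1)^n) d)"

definition y_degree :: "(var \<Rightarrow>\<^sub>0 nat) \<Rightarrow> nat" where
  "y_degree m = (\<Sum>v\<in>Poly_Mapping.keys m. case v of Y _ \<Rightarrow> Poly_Mapping.lookup m v | X _ \<Rightarrow> 0)"

end

theory Submission
  imports Defs
begin

unbundle fps_syntax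


definition mdeg :: "(var \<Rightarrow>\<^sub>0 nat) \<Rightarrow> nat" where
  "mdeg m = (\<Sum>v\<in>Poly_Mapping.keys m. Poly_Mapping.lookup m v)"

lemma mdeg_superset:
  assumes "finite K" "Poly_Mapping.keys m \<subseteq> K"
  shows "mdeg m = (\<Sum>v\<in>K. Poly_Mapping.lookup m v)"
  unfolding mdeg_def
  by (rule sum.mono_neutral_left) (use assms in \<open>auto simp: in_keys_iff\<close>)

lemma mdeg_add: "mdeg (a + b) = mdeg a + mdeg b"
proof -
  let ?K = "Poly_Mapping.keys a \<union> Poly_Mapping.keys b"
  have "mdeg (a+b) = (\<Sum>v\<in>?K. Poly_Mapping.lookup (a+b) v)"
    by (rule mdeg_superset) (auto dest: keys_add[THEN subsetD])
  also have "\<dots> = (\<Sum>v\<in>?K. Poly_Mapping.lookup a v) + (\<Sum>v\<in>?K. Poly_Mapping.lookup b v)"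
    by (simp add: lookup_add sum.distrib)
  also have "\<dots> = mdeg a + mdeg b"
    by (subst (1 2) mdeg_superset[where K="?K"]) auto
  finally show ?thesis .
qed

lemma mdeg_single: "mdeg (Poly_Mapping.single v n) = n"
  by (simp add: mdeg_def)

lemma mdeg_zero[simp]: "mdeg 0 = 0"
  by (simp add: mdeg_def)

definition yf :: "(var \<Rightarrow>\<^sub>0 nat) \<Rightarrow> var \<Rightarrow> nat" where
  "yf m v = (case v of Y _ \<Rightarrow> Poly_Mapping.lookup m v | X _ \<Rightarrow> 0)"

lemma ydeg_alt: "y_degree m = (\<Sum>v\<in>Poly_Mapping.keys m. yf m v)"
  by (simp add: y_degree_def yf_def)

lemma ydeg_superset:
  assumes "finite K" "Poly_Mapping.keys m \<subseteq> K"
  shows "y_degree m = (\<Sum>v\<in>K. yf m v)"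
  unfolding ydeg_alt
  by (rule sum.mono_neutral_left) (use assms in \<open>auto simp: in_keys_iff yf_def split: var.splits\<close>)

lemma ydeg_add: "y_degree (a + b) = y_degree a + y_degree b"
proof -
  let ?K = "Poly_Mapping.keys a \<union> Poly_Mapping.keys b"
  have "y_degree (a+b) = (\<Sum>v\<in>?K. yf (a+b) v)"
    by (rule ydeg_superset) (auto dest: keys_add[THEN subsetD])
  also have "\<dots> = (\<Sum>v\<in>?K. yf a v) + (\<Sum>v\<in>?K. yf b v)"
    by (simp add: sum.distrib[symmetric], rule sum.cong) (auto simp: yf_def lookup_add split: var.splits)
  also have "\<dots> = y_degree a + y_degree b"
    by (subst (1 2) ydeg_superset[where K="?K"]) auto
  finally show ?thesis .
qed

lemma ydeg_le_mdeg: "y_degree m \<le> mdeg m"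
  unfolding ydeg_alt mdeg_def by (rule sum_mono) (auto simp: yf_def split: var.splits)

lemma ydeg_singleX: "y_degree (Poly_Mapping.single (X k) 1) = 0"
  by (simp add: ydeg_alt yf_def)

lemma ydeg_singleY: "y_degree (Poly_Mapping.single (Y k) 1) = 1"
  by (simp add: ydeg_alt yf_def)

definition E :: "mpoly \<Rightarrow> mpoly" where
  "E p = Poly_Mapping.mapp (\<lambda>m c. of_nat (mdeg m) * c) p"

lemma lookup_E: "Poly_Mapping.lookup (E p) m = of_nat (mdeg m) * Poly_Mapping.lookup p m"
  by (auto simp: E_def lookup_mapp in_keys_iff when_def)

lemma E_add: "E (p + q) = E p + E q"
  by (rule poly_mapping_eqI) (simp add: lookup_E lookup_add algebra_simps)

lemma E_minus: "E (- p) = - E p"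
  by (rule poly_mapping_eqI) (simp add: lookup_E)

lemma E_diff: "E (p - q) = E p - E q"
  by (rule poly_mapping_eqI) (simp add: lookup_E lookup_minus algebra_simps)

lemma E_zero[simp]: "E 0 = 0"
  by (rule poly_mapping_eqI) (simp add: lookup_E)

lemma E_sum: "E (sum f A) = sum (\<lambda>x. E (f x)) A"
  by (induction A rule: infinite_finite_induct) (auto simp: E_add)

lemma E_single: "E (Poly_Mapping.single k c) = Poly_Mapping.single k (of_nat (mdeg k) * c)"
  by (rule poly_mapping_eqI) (simp add: lookup_E lookup_single when_def)

lemma pm_expand: "(p::mpoly) = (\<Sum>a\<in>Poly_Mapping.keys p. Poly_Mapping.single a (Poly_Mapping.lookup p a))"
proof (rule poly_mapping_eqI)
  fix k
  show "Poly_Mapping.lookup p k = Poly_Mapping.lookup (\<Sum>a\<in>Poly_Mapping.keys p. Poly_Mapping.single a (Poly_Mapping.lookup p a)) k"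
    by (cases "k \<in> Poly_Mapping.keys p")
       (auto simp: lookup_sum lookup_single when_def in_keys_iff)
qed

lemma E_single_mult: "E (Poly_Mapping.single a c * Poly_Mapping.single b d) =
   E (Poly_Mapping.single a c) * Poly_Mapping.single b d + Poly_Mapping.single a c * E (Poly_Mapping.single b d)"
  by (simp add: E_single mult_single single_add[symmetric] mdeg_add algebra_simps)

lemma E_mult: "E (p * q) = E p * q + p * E q"
proof -
  define s where "s = (\<lambda>p a. Poly_Mapping.single a (Poly_Mapping.lookup (p::mpoly) a))"
  define P where "P = (\<Sum>a\<in>Poly_Mapping.keys p. s p a)"
  define Q where "Q = (\<Sum>b\<in>Poly_Mapping.keys q. s q b)"
  have hP: "p = P" unfolding P_def s_def by (rule pm_expand)
  have hQ: "q = Q" unfolding Q_def s_def by (rule pm_expand)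
  have "E (P * Q) = (\<Sum>a\<in>Poly_Mapping.keys p. \<Sum>b\<in>Poly_Mapping.keys q. E (s p a * s q b))"
    unfolding P_def Q_def by (simp only: E_sum sum_product)
  also have "\<dots> = (\<Sum>a\<in>Poly_Mapping.keys p. \<Sum>b\<in>Poly_Mapping.keys q. E (s p a) * s q b + s p a * E (s q b))"
    unfolding s_def by (simp only: E_single_mult)
  also have "\<dots> = E P * Q + P * E Q"
    unfolding P_def Q_def by (simp only: E_sum sum_product sum.distrib)
  finally show ?thesis using hP hQ by simp
qed

lemma E_pconst[simp]: "E (pconst c) = 0"
  by (simp add: pconst_def E_single)

lemma E_of_nat[simp]: "E (of_nat n) = 0"
  by (simp add: E_single flip: single_of_nat)

lemma E_one[simp]: "E 1 = 0"
  using E_of_nat[of 1] by simp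

lemma E_pvar[simp]: "E (pvar v) = pvar v"
  by (simp add: pvar_def E_single mdeg_single)




lemma pconst_mult: "pconst a * pconst b = pconst (a * b)"
  by (simp add: pconst_def mult_single)

lemma pconst_one[simp]: "pconst 1 = 1"
  by (simp add: pconst_def)

lemma pconst_of_nat: "pconst (of_nat n) = of_nat n"
  by (simp add: pconst_def)

lemma pconst_neg1_pow: "pconst ((-1) ^ k) = (-1) ^ k"
proof (induction k)
  case 0 then show ?case by simp
next
  case (Suc k)
  have "pconst ((-1) ^ Suc k) = pconst (-1) * pconst ((-1)^k)"
    by (simp add: pconst_mult)
  also have "pconst (-1) = -1" by (simp add: pconst_def single_uminus)
  finally show ?case using Suc by simp
qed

lemma pow_nth_zero:
  fixes u :: "'a::comm_ring_1 fps"
  assumes "u $ 0 = 0"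
  shows "i < n \<Longrightarrow> (u ^ n) $ i = 0"
proof (induction n arbitrary: i)
  case 0 then show ?case by simp
next
  case (Suc n)
  have "(u ^ Suc n) $ i = (\<Sum>j=0..i. u $ j * (u ^ n) $ (i - j))"
    by (simp add: fps_mult_nth)
  also have "\<dots> = 0"
  proof (rule sum.neutral, intro ballI)
    fix j assume "j \<in> {0..i}"
    show "u $ j * (u ^ n) $ (i - j) = 0"
    proof (cases "j = 0")
      case True then show ?thesis using assms by simp
    next
      case False then show ?thesis using Suc \<open>j \<in> {0..i}\<close> by auto
    qed
  qed
  finally show ?case .
qed

lemma fps_cancel:
  fixes G F :: "'a::comm_ring_1 fps"
  assumes "G * F = 0" "F $ 0 = 1"
  shows "G = 0"
proof -
  have "G $ n = 0" for n
  proof (induction n rule: less_induct)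
    case (less n)
    have "0 = (G * F) $ n" using assms by simp
    also have "\<dots> = (\<Sum>i=0..n. F $ i * G $ (n - i))"
      by (simp add: fps_mult_nth mult.commute[of G F])
    also have "\<dots> = F $ 0 * G $ n"
    proof (subst sum.atLeast_Suc_atMost)
      show "(0::nat) \<le> n" by simp
      have "(\<Sum>i=Suc 0..n. F $ i * G $ (n - i)) = 0"
        by (rule sum.neutral) (auto simp: less.IH)
      then show "F $ 0 * G $ (n - 0) + (\<Sum>i=Suc 0..n. F $ i * G $ (n - i)) = F $ 0 * G $ n" by simp
    qed
    finally show ?case using assms by simp
  qed
  then show ?thesis by (intro fps_ext) simp
qed

lemma log_deriv:
  fixes D :: "mpoly fps \<Rightarrow> mpoly fps" and F :: "mpoly fps"
  assumes add: "\<And>f g. D (f + g) = D f + D g"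
  and mult: "\<And>f g. D (f * g) = D f * g + f * D g"
  and cst: "\<And>c. D (fps_const (pconst c)) = 0"
  and loc: "\<And>f g d. (\<And>i. i \<le> d \<Longrightarrow> f $ i = g $ i) \<Longrightarrow> D f $ d = D g $ d"
  and F0: "F $ 0 = 1"
  shows "F * D (fps_log F) = D F"
proof -
  have D0: "D 0 = 0" using add[of 0 0] by simp
  have Dsum: "D (sum f A) = (\<Sum>x\<in>A. D (f x))" for f :: "nat \<Rightarrow> mpoly fps" and A
    by (induction A rule: infinite_finite_induct) (auto simp: D0 add)
  have D1: "D 1 = 0" using cst[of 1] by simp
  have Dc: "D (fps_const (pconst c) * f) = fps_const (pconst c) * D f" for c f
    by (simp add: mult cst)
  define u where "u = F - 1"
  have u0: "u $ 0 = 0" using F0 by (simp add: u_def)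
  have Fu: "F = 1 + u" by (simp add: u_def)
  have Dpow: "D (u ^ Suc n) = of_nat (Suc n) * u ^ n * D u" for n
  proof (induction n)
    case 0 then show ?case using mult[of u 1] D1 by simp
  next
    case (Suc n)
    have "D (u ^ Suc (Suc n)) = D (u * u ^ Suc n)" by simp
    also have "\<dots> = D u * u ^ Suc n + u * (of_nat (Suc n) * u ^ n * D u)"
      by (simp only: mult Suc)
    also have "\<dots> = of_nat (Suc (Suc n)) * u ^ Suc n * D u"
      by (simp add: algebra_simps)
    finally show ?case .
  qed
  define c :: "nat \<Rightarrow> rat" where "c n = (-1) ^ (n + 1) / of_nat n" for n
  define L where "L N = (\<Sum>n\<in>{1..N}. fps_const (pconst (c n)) * u ^ n)" for N
  have logL: "fps_log F $ j = L N $ j" if "j \<le> N" for j N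
  proof -
    have "L N $ j = (\<Sum>n\<in>{1..N}. pconst (c n) * (u ^ n) $ j)"
      by (simp add: L_def fps_sum_nth)
    also have "\<dots> = (\<Sum>n\<in>{1..j}. pconst (c n) * (u ^ n) $ j)"
      by (rule sum.mono_neutral_right) (use that pow_nth_zero[OF u0] in auto)
    also have "\<dots> = fps_log F $ j"
      by (simp add: fps_log_def c_def u_def)
    finally show ?thesis by simp
  qed
  have coef: "fps_const (pconst (c n)) * of_nat n = (-1) ^ (n - 1)" if "n \<ge> 1" for n
  proof -
    have "fps_const (pconst (c n)) * (of_nat n :: mpoly fps) = fps_const (pconst (c n) * pconst (of_nat n))"
      by (simp add: pconst_of_nat flip: fps_of_nat)
    also have "\<dots> = fps_const (pconst ((-1) ^ (n - 1)))"
    proof -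
      have "c n * of_nat n = (-1) ^ (n - 1)"
        using that by (cases n) (auto simp: c_def)
      then show ?thesis by (simp add: pconst_mult)
    qed
    also have "\<dots> = (-1) ^ (n - 1)"
      by (simp add: pconst_neg1_pow flip: fps_const_power fps_const_neg)
    finally show ?thesis .
  qed
  have DL: "D (L N) = (\<Sum>j<N. (- u) ^ j) * D u" for N
  proof -
    have "D (L N) = (\<Sum>n\<in>{1..N}. fps_const (pconst (c n)) * D (u ^ n))"
      by (simp add: L_def Dsum Dc)
    also have "\<dots> = (\<Sum>n\<in>{1..N}. (- u) ^ (n - 1) * D u)"
    proof (rule sum.cong)
      fix n assume "n \<in> {1..N}"
      then obtain m where n: "n = Suc m" by (cases n) auto
      have "fps_const (pconst (c n)) * D (u ^ n) = (fps_const (pconst (c n)) * of_nat n) * u ^ m * D u"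
        unfolding n by (simp only: Dpow mult.assoc)
      also have "\<dots> = (-1) ^ m * u ^ m * D u"
      proof -
        have cm: "fps_const (pconst (c n)) * of_nat n = (-1) ^ m" using coef[of n] n by simp
        show ?thesis by (simp only: cm)
      qed
      also have "\<dots> = (- u) ^ (n - 1) * D u" by (simp only: n diff_Suc_1 power_minus[of u m])
      finally show "fps_const (pconst (c n)) * D (u ^ n) = (- u) ^ (n - 1) * D u" .
    qed simp
    also have "\<dots> = (\<Sum>j<N. (- u) ^ j * D u)"
      by (simp only: sum.atLeast1_atMost_eq diff_Suc_Suc minus_nat.diff_0 One_nat_def)
    finally show ?thesis by (simp only: sum_distrib_right)
  qed
  have geo: "F * (\<Sum>j<N. (- u) ^ j) = 1 - (- u) ^ N" for N
  proof -
    have h: "(1::mpoly fps) - - u = F" by (simp add: Fu)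
    from one_diff_power_eq[of "- u" N] have "1 - (- u) ^ N = (1 - - u) * (\<Sum>i<N. (- u) ^ i)" .
    then show ?thesis unfolding h by (rule sym)
  qed
  have DF: "D F = D u" by (simp add: Fu add D1)
  show ?thesis
  proof (rule fps_ext)
    fix d
    let ?N = "Suc d"
    have "(F * D (fps_log F)) $ d = (\<Sum>i=0..d. F $ i * D (fps_log F) $ (d - i))"
      by (simp add: fps_mult_nth)
    also have "\<dots> = (\<Sum>i=0..d. F $ i * D (L ?N) $ (d - i))"
    proof (rule sum.cong[OF refl])
      fix i assume "i \<in> {0..d}"
      have "D (fps_log F) $ (d - i) = D (L ?N) $ (d - i)"
      proof (rule loc)
        fix j assume "j \<le> d - i"
        then show "fps_log F $ j = L ?N $ j" by (intro logL) simp
      qed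
      then show "F $ i * D (fps_log F) $ (d - i) = F $ i * D (L ?N) $ (d - i)" by simp
    qed
    also have "\<dots> = (F * D (L ?N)) $ d" by (simp add: fps_mult_nth)
    also have "F * D (L ?N) = (F * (\<Sum>j<?N. (- u) ^ j)) * D u" by (simp only: DL mult.assoc)
    also have "\<dots> = (1 - (- u) ^ ?N) * D u" by (simp only: geo)
    also have "\<dots> = D u - (- u) ^ ?N * D u" by (simp only: left_diff_distrib mult_1_left)
    also have "(D u - (- u) ^ ?N * D u) $ d = D u $ d"
    proof -
      have "((- u) ^ ?N * D u) $ d = 0"
        unfolding fps_mult_nth
      proof (rule sum.neutral, rule ballI)
        fix i assume "i \<in> {0..d}"
        then have "((- u) ^ Suc d) $ i = 0" by (intro pow_nth_zero) (auto simp: u0)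
        then show "((- u) ^ Suc d) $ i * D u $ (d - i) = 0" by (simp only: mult_zero_left)
      qed
      then show ?thesis by simp
    qed
    finally show "(F * D (fps_log F)) $ d = D F $ d" using DF by simp
  qed
qed




definition step :: "nat list \<Rightarrow> nat \<Rightarrow> mpoly" where
  "step ds i = pvar (Y (ds!i - ds!(i-1))) + pvar (X (ds!i - ds!(i-1))) * of_nat (ds!(i-1))"

lemma chain_term_alt: "chain_term ds = pconst (1 / of_nat (fact (length ds - 1))) * (\<Prod>i\<in>{1..length ds - 1}. step ds i)"
  by (simp add: chain_term_def step_def Let_def)

lemma E_step: "E (step ds i) = step ds i"
  by (simp add: step_def E_add E_mult)

lemma E_prod1:
  assumes "\<And>i. E (g i) = g i"
  shows "E (\<Prod>i\<in>{1..r}. g i) = of_nat r * (\<Prod>i\<in>{1..r}. g i)"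
proof (induction r)
  case 0 then show ?case by simp
next
  case (Suc r)
  have "(\<Prod>i\<in>{1..Suc r}. g i) = (\<Prod>i\<in>{1..r}. g i) * g (Suc r)"
    by (simp add: prod.cl_ivl_Suc)
  then show ?case using Suc by (simp add: E_mult assms algebra_simps)
qed

lemma E_chain_term: "E (chain_term ds) = of_nat (length ds - 1) * chain_term ds"
  unfolding chain_term_alt by (simp only: E_mult E_pconst E_prod1[OF E_step]) (simp add: algebra_simps)

lemma sorted_le_last: "sorted_wrt (<) (xs::nat list) \<Longrightarrow> x \<in> set xs \<Longrightarrow> x \<le> last xs"
proof (induction xs)
  case Nil then show ?case by simp
next
  case (Cons a xs)
  show ?case
  proof (cases "xs = []")
    case True with Cons show ?thesis by simp
  next
    case False
    have "last xs \<in> set xs" using False by simp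
    then have "a < last xs" using Cons.prems(1) by simp
    moreover have "x = a \<or> x \<in> set xs" using Cons.prems(2) by simp
    show ?thesis
    proof (cases "x = a")
      case True then show ?thesis using \<open>a < last xs\<close> False by simp
    next
      case False2: False
      then have "x \<in> set xs" using Cons.prems(2) by simp
      then show ?thesis using Cons.IH Cons.prems(1) False by simp
    qed
  qed
qed

lemma chains0: "chains 0 = {[0]}"
proof
  show "{[0]} \<subseteq> chains 0" by (simp add: chains_def)
  show "chains 0 \<subseteq> {[0]}"
  proof
    fix ds assume "ds \<in> chains 0"
    then have c: "ds \<noteq> []" "hd ds = 0" "last ds = 0" "sorted_wrt (<) ds" by (auto simp: chains_def)
    obtain a rest where ds: "ds = a # rest" using c(1) by (cases ds) auto
    have "rest = []"
    proof (rule ccontr)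
      assume ne: "rest \<noteq> []"
      then have "last rest \<in> set rest" by simp
      then have "a < last rest" using c(4) ds by simp
      then show False using c(2,3) ds ne by simp
    qed
    then show "ds \<in> {[0]}" using c ds by simp
  qed
qed

lemma finite_chains: "finite (chains n)"
proof -
  have "chains n \<subseteq> {xs. set xs \<subseteq> {0..n} \<and> length xs \<le> Suc n}"
  proof
    fix ds assume "ds \<in> chains n"
    then have s: "sorted_wrt (<) ds" and l: "last ds = n" by (auto simp: chains_def)
    have "set ds \<subseteq> {0..n}" using sorted_le_last[OF s] l by auto
    moreover have "distinct ds" using s by (simp add: strict_sorted_iff)
    then have "length ds = card (set ds)" by (simp add: distinct_card)
    moreover have "card (set ds) \<le> Suc n"
      using card_mono[OF _ \<open>set ds \<subseteq> {0..n}\<close>] by simp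
    ultimately show "ds \<in> {xs. set xs \<subseteq> {0..n} \<and> length xs \<le> Suc n}" by simp
  qed
  moreover have "finite {xs. set xs \<subseteq> {0..n} \<and> length xs \<le> Suc n}"
    by (rule finite_lists_length_le) simp
  ultimately show ?thesis by (rule finite_subset)
qed

lemma chains_bij:
  assumes "d \<ge> 1"
  shows "bij_betw (\<lambda>(k, ds'). ds' @ [d]) (SIGMA k:{1..d}. chains (d - k)) (chains d)"
proof (rule bij_betwI')
  fix a b assume a: "a \<in> (SIGMA k:{1..d}. chains (d - k))" and b: "b \<in> (SIGMA k:{1..d}. chains (d - k))"
  obtain k1 ds1 where a1: "a = (k1, ds1)" by (cases a)
  obtain k2 ds2 where b1: "b = (k2, ds2)" by (cases b)
  show "((case a of (k, ds') \<Rightarrow> ds' @ [d]) = (case b of (k, ds') \<Rightarrow> ds' @ [d])) = (a = b)"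
  proof
    assume "(case a of (k, ds') \<Rightarrow> ds' @ [d]) = (case b of (k, ds') \<Rightarrow> ds' @ [d])"
    then have "ds1 = ds2" by (simp add: a1 b1)
    moreover have "last ds1 = d - k1" "last ds2 = d - k2" "k1 \<le> d" "k2 \<le> d"
      using a b by (auto simp: a1 b1 chains_def)
    ultimately have "d - k1 = d - k2" "k1 \<le> d" "k2 \<le> d" by auto
    then have "k1 = k2" by linarith
    then show "a = b" using \<open>ds1 = ds2\<close> by (simp add: a1 b1)
  qed simp
next
  fix a assume a: "a \<in> (SIGMA k:{1..d}. chains (d - k))"
  obtain k ds where a1: "a = (k, ds)" by (cases a)
  have k: "1 \<le> k" "k \<le> d" and c: "ds \<noteq> []" "hd ds = 0" "last ds = d - k" "sorted_wrt (<) ds"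
    using a by (auto simp: a1 chains_def)
  have "\<forall>x\<in>set ds. x < d" using sorted_le_last[OF c(4)] c(3) k by fastforce
  then show "(case a of (k, ds') \<Rightarrow> ds' @ [d]) \<in> chains d"
    using c by (simp add: a1 chains_def sorted_wrt_append)
next
  fix ds assume "ds \<in> chains d"
  then have c: "ds \<noteq> []" "hd ds = 0" "last ds = d" "sorted_wrt (<) ds" by (auto simp: chains_def)
  define ds' where "ds' = butlast ds"
  have dsd: "ds = ds' @ [d]" using append_butlast_last_id[OF c(1)] c(3) by (simp add: ds'_def)
  have ne: "ds' \<noteq> []"
  proof
    assume "ds' = []"
    then have "ds = [d]" using dsd by simp
    then show False using c assms by simp
  qed
  have hd': "hd ds' = 0" using c(2) ne by (simp add: dsd)
  have s': "sorted_wrt (<) ds'" and lt: "\<forall>x\<in>set ds'. x < d"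
    using c(4) by (simp_all add: dsd sorted_wrt_append)
  have ll: "last ds' < d" using lt ne by simp
  define k where "k = d - last ds'"
  have "k \<in> {1..d}" using ll by (auto simp: k_def)
  moreover have "ds' \<in> chains (d - k)" using ne hd' s' ll by (simp add: chains_def k_def)
  ultimately show "\<exists>a\<in>(SIGMA k:{1..d}. chains (d - k)). ds = (case a of (k, ds') \<Rightarrow> ds' @ [d])"
    using dsd by force
qed

lemma sum_chains:
  assumes "d \<ge> 1"
  shows "(\<Sum>ds\<in>chains d. g ds) = (\<Sum>k\<in>{1..d}. \<Sum>ds'\<in>chains (d - k). g (ds' @ [d]))"
proof -
  have "(\<Sum>ds\<in>chains d. g ds) = (\<Sum>x\<in>(SIGMA k:{1..d}. chains (d - k)). g ((\<lambda>(k, ds'). ds' @ [d]) x))"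
    by (rule sum.reindex_bij_betw[OF chains_bij[OF assms], symmetric])
  also have "\<dots> = (\<Sum>x\<in>(SIGMA k:{1..d}. chains (d - k)). (\<lambda>(k, ds'). g (ds' @ [d])) x)"
    by (rule sum.cong) auto
  also have "\<dots> = (\<Sum>k\<in>{1..d}. \<Sum>ds'\<in>chains (d - k). g (ds' @ [d]))"
    by (subst sum.Sigma) (auto simp: finite_chains)
  finally show ?thesis .
qed

lemma E_chain_append:
  assumes "ds' \<in> chains (d - k)" "1 \<le> k" "k \<le> d"
  shows "E (chain_term (ds' @ [d])) = chain_term ds' * (pvar (Y k) + pvar (X k) * of_nat (d - k))"
proof -
  have ne: "ds' \<noteq> []" and l: "last ds' = d - k" using assms by (auto simp: chains_def)
  obtain r where r: "length ds' = Suc r" using ne by (cases ds') auto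
  have st: "step (ds' @ [d]) i = step ds' i" if "i \<in> {1..r}" for i
    using that r by (auto simp: step_def nth_append)
  have stl: "step (ds' @ [d]) (Suc r) = pvar (Y k) + pvar (X k) * of_nat (d - k)"
  proof -
    have "(ds' @ [d]) ! r = d - k" using r l ne by (simp add: nth_append last_conv_nth)
    moreover have "(ds' @ [d]) ! Suc r = d" using r by (simp add: nth_append)
    ultimately show ?thesis using assms by (simp add: step_def)
  qed
  have "(\<Prod>i\<in>{1..Suc r}. step (ds' @ [d]) i) = (\<Prod>i\<in>{1..r}. step ds' i) * (pvar (Y k) + pvar (X k) * of_nat (d - k))"
    by (simp add: prod.cl_ivl_Suc stl st)
  moreover have "of_nat (Suc r) * pconst (1 / of_nat (fact (Suc r))) = (pconst (1 / of_nat (fact r)) :: mpoly)"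
  proof -
    have "(of_nat (Suc r) :: rat) * (1 / of_nat (fact (Suc r))) = 1 / of_nat (fact r)"
    proof -
      have "(fact r :: rat) \<noteq> 0" by simp
      moreover have "(1 + of_nat r :: rat) \<noteq> 0" by (simp add: add_pos_nonneg)
      ultimately have "(fact r :: rat) * (1 + of_nat r) \<noteq> 0" by simp
      then show ?thesis by (simp add: fact_Suc field_simps)
    qed
    then show ?thesis by (simp add: pconst_mult flip: pconst_of_nat)
  qed
  ultimately show ?thesis
    unfolding E_chain_term by (simp add: chain_term_alt r mult.assoc[symmetric] mult.commute[of "of_nat (Suc r)"])
qed

lemma E_F_coeff:
  "E (F_series $ d) = (\<Sum>k\<in>{1..d}. (pvar (Y k) + pvar (X k) * of_nat (d - k)) * F_series $ (d - k))"
proof (cases "d = 0")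
  case True
  then show ?thesis by (simp add: F_series_def E_chain_term chains0)
next
  case False
  then have d: "d \<ge> 1" by simp
  have "E (F_series $ d) = (\<Sum>ds\<in>chains d. E (chain_term ds))"
    by (simp add: F_series_def E_sum)
  also have "\<dots> = (\<Sum>k\<in>{1..d}. \<Sum>ds'\<in>chains (d - k). E (chain_term (ds' @ [d])))"
    by (rule sum_chains[OF d])
  also have "\<dots> = (\<Sum>k\<in>{1..d}. \<Sum>ds'\<in>chains (d - k). chain_term ds' * (pvar (Y k) + pvar (X k) * of_nat (d - k)))"
    by (intro sum.cong refl E_chain_append) auto
  also have "\<dots> = (\<Sum>k\<in>{1..d}. (pvar (Y k) + pvar (X k) * of_nat (d - k)) * F_series $ (d - k))"
    by (simp add: F_series_def sum_distrib_right mult.commute)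
  finally show ?thesis .
qed




definition Efps :: "mpoly fps \<Rightarrow> mpoly fps" where
  "Efps f = Abs_fps (\<lambda>d. E (f $ d))"

definition theta :: "mpoly fps \<Rightarrow> mpoly fps" where
  "theta f = Abs_fps (\<lambda>d. of_nat d * f $ d)"

definition Yser :: "mpoly fps" where
  "Yser = Abs_fps (\<lambda>k. if k = 0 then 0 else pvar (Y k))"

definition Xser :: "mpoly fps" where
  "Xser = Abs_fps (\<lambda>k. if k = 0 then 0 else pvar (X k))"

lemma Efps_log: "F $ 0 = 1 \<Longrightarrow> F * Efps (fps_log F) = Efps F"
proof (rule log_deriv)
  show "Efps (f + g) = Efps f + Efps g" for f g
    by (rule fps_ext) (simp add: Efps_def E_add)
  show "Efps (f * g) = Efps f * g + f * Efps g" for f g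
    by (rule fps_ext) (simp add: Efps_def fps_mult_nth E_sum E_mult sum.distrib)
  show "Efps (fps_const (pconst c)) = 0" for c
    by (rule fps_ext) (simp add: Efps_def)
  show "Efps f $ d = Efps g $ d" if "\<And>i. i \<le> d \<Longrightarrow> f $ i = g $ i" for f g d
    using that by (simp add: Efps_def)
qed

lemma theta_log: "F $ 0 = 1 \<Longrightarrow> F * theta (fps_log F) = theta F"
proof (rule log_deriv)
  show "theta (f + g) = theta f + theta g" for f g
    by (rule fps_ext) (simp add: theta_def algebra_simps)
  show "theta (f * g) = theta f * g + f * theta g" for f g
  proof (rule fps_ext)
    fix d
    have "theta (f * g) $ d = (\<Sum>i=0..d. of_nat d * (f $ i * g $ (d - i)))"
      by (simp add: theta_def fps_mult_nth sum_distrib_left)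
    also have "\<dots> = (\<Sum>i=0..d. of_nat i * f $ i * g $ (d - i) + f $ i * (of_nat (d - i) * g $ (d - i)))"
    proof (rule sum.cong[OF refl])
      fix i assume "i \<in> {0..d}"
      then have "(of_nat d :: mpoly) = of_nat i + of_nat (d - i)" by (simp flip: of_nat_add)
      then show "of_nat d * (f $ i * g $ (d - i)) = of_nat i * f $ i * g $ (d - i) + f $ i * (of_nat (d - i) * g $ (d - i))"
        by (simp add: algebra_simps)
    qed
    also have "\<dots> = (theta f * g + f * theta g) $ d"
      by (simp add: theta_def fps_mult_nth sum.distrib)
    finally show "theta (f * g) $ d = (theta f * g + f * theta g) $ d" .
  qed
  show "theta (fps_const (pconst c)) = 0" for c
    by (rule fps_ext) (simp add: theta_def)
  show "theta f $ d = theta g $ d" if "\<And>i. i \<le> d \<Longrightarrow> f $ i = g $ i" for f g d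
    using that by (simp add: theta_def)
qed

lemma F0: "F_series $ 0 = 1"
  by (simp add: F_series_def chains0 chain_term_def)

lemma EF: "Efps F_series = Yser * F_series + Xser * theta F_series"
proof (rule fps_ext)
  fix d
  have "(Yser * F_series + Xser * theta F_series) $ d =
     (\<Sum>i=0..d. Yser $ i * F_series $ (d - i) + Xser $ i * (of_nat (d - i) * F_series $ (d - i)))"
    by (simp add: fps_mult_nth sum.distrib theta_def)
  also have "\<dots> = (\<Sum>i=Suc 0..d. Yser $ i * F_series $ (d - i) + Xser $ i * (of_nat (d - i) * F_series $ (d - i)))"
    by (subst sum.atLeast_Suc_atMost) (simp_all add: Yser_def Xser_def)
  also have "\<dots> = (\<Sum>k\<in>{1..d}. (pvar (Y k) + pvar (X k) * of_nat (d - k)) * F_series $ (d - k))"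
    by (rule sum.cong) (auto simp: Yser_def Xser_def algebra_simps)
  also have "\<dots> = Efps F_series $ d"
    by (simp add: Efps_def E_F_coeff)
  finally show "Efps F_series $ d = (Yser * F_series + Xser * theta F_series) $ d" by simp
qed

lemma H_eq: "Efps (fps_log F_series) = Yser + Xser * theta (fps_log F_series)"
proof -
  let ?H = "fps_log F_series" and ?F = F_series
  have 1: "?F * Efps ?H = Efps ?F" by (rule Efps_log[OF F0])
  have 2: "?F * theta ?H = theta ?F" by (rule theta_log[OF F0])
  have "(Efps ?H - (Yser + Xser * theta ?H)) * ?F = ?F * Efps ?H - (Yser * ?F + Xser * (?F * theta ?H))"
    by (simp only: right_diff_distrib distrib_left left_diff_distrib distrib_right mult.commute mult.left_commute)
  also have "\<dots> = 0" by (simp only: 1 2 EF diff_self)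
  finally have "Efps ?H - (Yser + Xser * theta ?H) = 0"
    by (rule fps_cancel) (rule F0)
  then show ?thesis by simp
qed

lemma H_coeff: "E (fps_log F_series $ d) =
   Yser $ d + (\<Sum>i=0..d. Xser $ i * (of_nat (d - i) * fps_log F_series $ (d - i)))"
proof -
  have "E (fps_log F_series $ d) = Efps (fps_log F_series) $ d" by (simp add: Efps_def)
  also have "\<dots> = Yser $ d + (\<Sum>i=0..d. Xser $ i * (of_nat (d - i) * fps_log F_series $ (d - i)))"
    by (simp only: H_eq) (simp add: fps_mult_nth theta_def)
  finally show ?thesis .
qed

lemma keys_of_nat_mult: "Poly_Mapping.keys ((of_nat c :: mpoly) * q) \<subseteq> Poly_Mapping.keys q"
proof -
  have "Poly_Mapping.keys ((of_nat c :: mpoly) * q) \<subseteq> {a + b |a b. a \<in> Poly_Mapping.keys (of_nat c :: mpoly) \<and> b \<in> Poly_Mapping.keys q}"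
    by (rule keys_mult)
  also have "\<dots> \<subseteq> Poly_Mapping.keys q"
  proof -
    have "Poly_Mapping.keys (of_nat c :: mpoly) \<subseteq> {0}"
      by (simp flip: single_of_nat)
    then show ?thesis by auto
  qed
  finally show ?thesis .
qed

lemma main_induct:
  "\<forall>d m. m \<in> Poly_Mapping.keys (fps_log F_series $ d) \<longrightarrow> mdeg m = n \<longrightarrow> y_degree m \<le> 1"
proof (induction n rule: less_induct)
  case (less n)
  show ?case
  proof (intro allI impI, rule ccontr)
    fix d m
    let ?H = "fps_log F_series"
    assume m: "m \<in> Poly_Mapping.keys (?H $ d)" and n: "mdeg m = n" and y: "\<not> y_degree m \<le> 1"
    have "n \<noteq> 0" using y ydeg_le_mdeg[of m] n by linarith
    then have "m \<in> Poly_Mapping.keys (E (?H $ d))"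
      using m n by (simp add: in_keys_iff lookup_E)
    then have "m \<in> Poly_Mapping.keys (Yser $ d) \<union> (\<Union>i\<in>{0..d}. Poly_Mapping.keys (Xser $ i * (of_nat (d - i) * ?H $ (d - i))))"
    proof -
      have "Poly_Mapping.keys (E (?H $ d)) \<subseteq> Poly_Mapping.keys (Yser $ d) \<union> Poly_Mapping.keys (\<Sum>i=0..d. Xser $ i * (of_nat (d - i) * ?H $ (d - i)))"
        unfolding H_coeff by (rule keys_add)
      moreover have "Poly_Mapping.keys (\<Sum>i=0..d. Xser $ i * (of_nat (d - i) * ?H $ (d - i))) \<subseteq> (\<Union>i\<in>{0..d}. Poly_Mapping.keys (Xser $ i * (of_nat (d - i) * ?H $ (d - i))))"
        by (rule keys_sum)
      ultimately show ?thesis using \<open>m \<in> Poly_Mapping.keys (E (?H $ d))\<close> by blast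
    qed
    then show False
    proof
      assume "m \<in> Poly_Mapping.keys (Yser $ d)"
      then have "m = Poly_Mapping.single (Y d) 1"
        by (auto simp: Yser_def pvar_def split: if_splits)
      then show False using y ydeg_singleY by simp
    next
      assume "m \<in> (\<Union>i\<in>{0..d}. Poly_Mapping.keys (Xser $ i * (of_nat (d - i) * ?H $ (d - i))))"
      then obtain i where i: "i \<in> {0..d}" and mi: "m \<in> Poly_Mapping.keys (Xser $ i * (of_nat (d - i) * ?H $ (d - i)))"
        by blast
      have i0: "i \<noteq> 0"
      proof
        assume "i = 0"
        then have "Xser $ i = 0" by (simp add: Xser_def)
        then show False using mi by simp
      qed
      then have "m \<in> Poly_Mapping.keys (pvar (X i) * (of_nat (d - i) * ?H $ (d - i)))"
        using mi by (simp add: Xser_def)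
      then obtain a b where ab: "m = a + b" "a \<in> Poly_Mapping.keys (pvar (X i))"
          "b \<in> Poly_Mapping.keys (of_nat (d - i) * ?H $ (d - i))"
        using keys_mult[of "pvar (X i)" "of_nat (d - i) * ?H $ (d - i)"] by blast
      have a: "a = Poly_Mapping.single (X i) 1" using ab(2) by (simp add: pvar_def)
      have b: "b \<in> Poly_Mapping.keys (?H $ (d - i))" using ab(3) keys_of_nat_mult by blast
      have "mdeg m = 1 + mdeg b" using ab(1) a by (simp add: mdeg_add mdeg_single)
      then have "mdeg b < n" using n by simp
      moreover have "y_degree b = y_degree m" by (simp only: ab(1) a ydeg_add ydeg_singleX add_0)
      ultimately have "y_degree b \<le> 1" using less.IH[of "mdeg b"] b by blast
      then show False using y \<open>y_degree b = y_degree m\<close> by simp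
    qed
  qed
qed

theorem proposition8p1:
  shows "\<forall>d. \<forall>m \<in> Poly_Mapping.keys (fps_nth (fps_log F_series) d). y_degree m \<le> 1"
  using main_induct by blast


end
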